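(* Let $K$ be a field, $\mathcal A$ a $K$-algebra, $\vartheta$ any one of the four types (left, right, pre-two-sided, two-sided), and $M$ a $\vartheta$-Mathieu subspace of $\mathcal A$ such that every element of $\sqrt M$ is algebraic over $K$. Let $V$ be a $K$-subspace of $M$ with $I_M\subseteq V$. Then $V$ is a $\vartheta$-Mathieu subspace of $\mathcal A$ and $\sqrt V=\sqrt{I_M}$.
   Context: All algebras are associative and unital. $\sqrt S$ is the set of $a\in\mathcal A$ with $a^m\in S$ for all sufficiently large $m$. For $\vartheta\neq$ pre-two-sided, $I_M$ is the largest $\vartheta$-ideal of $\mathcal A$ contained in $M$ (the sum of all of them), where a $\vartheta$-ideal is a left ideal if $\vartheta$ = left, right ideal if right, two-sided ideal if two-sided; for $\vartheta$ = pre-two-sided, $I_M$ is the sum of the largest left ideal contained in $M$ and the largest right ideal contained in $M$. A $K$-subspace $V$ is a left (resp. right) Mathieu subspace if whenever $a^m\in V$ for all $m\ge1$, then for every $b\in\mathcal A$, $ba^m\in V$ (resp. $a^mb\in V$) for all sufficiently large $m$; pre-two-sided if both left and right; two-sided if whenever $a^m\in V$ for all $m\ge1$, then for all $b,c$, $ba^mc\in V$ for all sufficiently large $m$. *)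

theory Defs
  imports Main "HOL-Computational_Algebra.Polynomial"
begin

definition k_algebra :: "('k::field \<Rightarrow> 'a::ring_1 \<Rightarrow> 'a) \<Rightarrow> bool" where
  "k_algebra s \<longleftrightarrow> vector_space s \<and>
     (\<forall>c a b. s c (a * b) = s c a * b \<and> s c (a * b) = a * s c b)"

definition algebraic_over :: "('k::field \<Rightarrow> 'a::ring_1 \<Rightarrow> 'a) \<Rightarrow> 'a \<Rightarrow> bool" where
  "algebraic_over s a \<longleftrightarrow>
     (\<exists>p :: 'k poly. p \<noteq> 0 \<and> (\<Sum>i\<le>degree p. s (coeff p i) (a ^ i)) = 0)"

definition rad :: "'a::monoid_mult set \<Rightarrow> 'a set" where
  "rad S = {a. \<exists>N. \<forall>m\<ge>N. a ^ m \<in> S}"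

datatype mtype = LeftT | RightT | PreTwoT | TwoT

definition mathieu :: "('k::field \<Rightarrow> 'a::ring_1 \<Rightarrow> 'a) \<Rightarrow> mtype \<Rightarrow> 'a set \<Rightarrow> bool" where
  "mathieu s t V \<longleftrightarrow> module.subspace s V \<and>
     (\<forall>a. (\<forall>m\<ge>1. a ^ m \<in> V) \<longrightarrow>
        (case t of
           LeftT \<Rightarrow> (\<forall>b. \<exists>N. \<forall>m\<ge>N. b * a ^ m \<in> V)
         | RightT \<Rightarrow> (\<forall>b. \<exists>N. \<forall>m\<ge>N. a ^ m * b \<in> V)
         | PreTwoT \<Rightarrow> (\<forall>b. \<exists>N. \<forall>m\<ge>N. b * a ^ m \<in> V) \<and>
                      (\<forall>b. \<exists>N. \<forall>m\<ge>N. a ^ m * b \<in> V)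
         | TwoT \<Rightarrow> (\<forall>b c. \<exists>N. \<forall>m\<ge>N. b * a ^ m * c \<in> V)))"

definition left_ideal :: "'a::ring_1 set \<Rightarrow> bool" where
  "left_ideal I \<longleftrightarrow> 0 \<in> I \<and> (\<forall>x\<in>I. \<forall>y\<in>I. x + y \<in> I) \<and> (\<forall>b. \<forall>x\<in>I. b * x \<in> I)"

definition right_ideal :: "'a::ring_1 set \<Rightarrow> bool" where
  "right_ideal I \<longleftrightarrow> 0 \<in> I \<and> (\<forall>x\<in>I. \<forall>y\<in>I. x + y \<in> I) \<and> (\<forall>b. \<forall>x\<in>I. x * b \<in> I)"

definition twosided_ideal :: "'a::ring_1 set \<Rightarrow> bool" where
  "twosided_ideal I \<longleftrightarrow> left_ideal I \<and> right_ideal I"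

definition sum_of_sets :: "'a::comm_monoid_add set set \<Rightarrow> 'a set" where
  "sum_of_sets \<F> = {\<Sum>F | F. finite F \<and> F \<subseteq> \<Union>\<F>}"

definition largest_in :: "('a set \<Rightarrow> bool) \<Rightarrow> 'a::ring_1 set \<Rightarrow> 'a set" where
  "largest_in P M = sum_of_sets {I. P I \<and> I \<subseteq> M}"

definition I_M :: "mtype \<Rightarrow> 'a::ring_1 set \<Rightarrow> 'a set" where
  "I_M t M = (case t of
      LeftT \<Rightarrow> largest_in left_ideal M
    | RightT \<Rightarrow> largest_in right_ideal M
    | TwoT \<Rightarrow> largest_in twosided_ideal M
    | PreTwoT \<Rightarrow> {x + y | x y. x \<in> largest_in left_ideal M \<and> y \<in> largest_in right_ideal M})"

end

theory Submission imports Defs begin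

lemma alg_hom:
  assumes "k_algebra s"
  shows "b * s c x * d = s c (b * x * d)"
proof -
  from assms have h: "\<And>c a b. s c (a * b) = s c a * b \<and> s c (a * b) = a * s c b"
    unfolding k_algebra_def by blast
  have "b * s c x = s c (b * x)" using h by metis
  then show ?thesis using h by metis
qed

lemma shift:
  assumes alg: "k_algebra s" and sub: "module.subspace s M" and ao: "algebraic_over s a"
  shows "\<exists>r. \<forall>b d L. (\<forall>m\<ge>L. b * a ^ m * d \<in> M) \<longrightarrow> (\<forall>k\<ge>r. b * a ^ k * d \<in> M)"
proof -
  interpret vector_space s using alg unfolding k_algebra_def by blast
  obtain p :: "'a poly" where p0: "p \<noteq> 0" and pe: "(\<Sum>i\<le>degree p. s (coeff p i) (a ^ i)) = 0"
    using ao unfolding algebraic_over_def by blast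
  define d where "d = degree p"
  define r where "r = (LEAST i. coeff p i \<noteq> 0)"
  have ex: "\<exists>i. coeff p i \<noteq> 0" using p0 by (metis leading_coeff_neq_0)
  have cr: "coeff p r \<noteq> 0" unfolding r_def using ex by (rule LeastI_ex)
  have lt: "\<And>i. i < r \<Longrightarrow> coeff p i = 0" unfolding r_def using not_less_Least by blast
  have rd: "r \<le> d" unfolding d_def using cr le_degree by blast
  show ?thesis
  proof (rule exI[of _ r], intro allI, rule impI)
    fix b dd L
    assume H: "\<forall>m\<ge>L. b * a ^ m * dd \<in> M"
    let ?f = "\<lambda>x. b * x * dd"
    have key: "\<And>j. (\<Sum>i\<le>d. s (coeff p i) (?f (a ^ (i + j)))) = 0"
    proof -
      fix j
      have "(\<Sum>i\<le>d. s (coeff p i) (?f (a ^ (i + j)))) = (\<Sum>i\<le>d. b * s (coeff p i) (a ^ i) * (a ^ j * dd))"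
      proof (intro sum.cong refl)
        fix i
        have "?f (a ^ (i + j)) = b * a ^ i * (a ^ j * dd)" by (simp add: power_add mult.assoc)
        then show "s (coeff p i) (?f (a ^ (i + j))) = b * s (coeff p i) (a ^ i) * (a ^ j * dd)"
          by (simp only: alg_hom[OF alg])
      qed
      also have "\<dots> = b * (\<Sum>i\<le>d. s (coeff p i) (a ^ i)) * (a ^ j * dd)"
        by (simp add: sum_distrib_left sum_distrib_right)
      finally show "(\<Sum>i\<le>d. s (coeff p i) (?f (a ^ (i + j)))) = 0" using pe d_def by simp
    qed
    have split: "\<And>j. s (coeff p r) (?f (a ^ (r + j))) + (\<Sum>i\<in>{r<..d}. s (coeff p i) (?f (a ^ (i + j)))) = 0"
    proof -
      fix j
      have U: "{..d} = {..<r} \<union> ({r} \<union> {r<..d})" using rd by auto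
      have "(\<Sum>i\<le>d. s (coeff p i) (?f (a ^ (i + j)))) =
         (\<Sum>i\<in>{..<r}. s (coeff p i) (?f (a ^ (i + j)))) + (s (coeff p r) (?f (a ^ (r + j))) + (\<Sum>i\<in>{r<..d}. s (coeff p i) (?f (a ^ (i + j)))))"
        unfolding U by (subst sum.union_disjoint) (auto simp: sum.union_disjoint)
      moreover have "(\<Sum>i\<in>{..<r}. s (coeff p i) (?f (a ^ (i + j)))) = 0"
        by (intro sum.neutral) (simp add: lt)
      ultimately show "s (coeff p r) (?f (a ^ (r + j))) + (\<Sum>i\<in>{r<..d}. s (coeff p i) (?f (a ^ (i + j)))) = 0"
        using key[of j] by simp
    qed
    have ind: "\<And>j. r + j + n \<ge> L \<Longrightarrow> ?f (a ^ (r + j)) \<in> M" for n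
    proof (induction n)
      case 0 then show ?case using H by simp
    next
      case (Suc n)
      fix j assume j: "r + j + Suc n \<ge> L"
      have each: "\<And>i. i \<in> {r<..d} \<Longrightarrow> s (coeff p i) (?f (a ^ (i + j))) \<in> M"
      proof -
        fix i assume i: "i \<in> {r<..d}"
        have "r + (i - r + j) + n \<ge> L" using i j by auto
        then have "?f (a ^ (r + (i - r + j))) \<in> M" by (rule Suc.IH)
        moreover have "r + (i - r + j) = i + j" using i by auto
        ultimately show "s (coeff p i) (?f (a ^ (i + j))) \<in> M" using subspace_scale[OF sub] by simp
      qed
      have sm: "(\<Sum>i\<in>{r<..d}. s (coeff p i) (?f (a ^ (i + j)))) \<in> M"
        by (rule subspace_sum[OF sub]) (rule each)
      have e1: "s (coeff p r) (?f (a ^ (r + j))) = - (\<Sum>i\<in>{r<..d}. s (coeff p i) (?f (a ^ (i + j))))"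
        using split[of j] by (simp only: eq_neg_iff_add_eq_0)
      have e2: "s (inverse (coeff p r)) (s (coeff p r) (?f (a ^ (r + j)))) = ?f (a ^ (r + j))"
        using cr by simp
      have "?f (a ^ (r + j)) = s (inverse (coeff p r)) (- (\<Sum>i\<in>{r<..d}. s (coeff p i) (?f (a ^ (i + j)))))"
        using e1 e2 by simp
      then show "?f (a ^ (r + j)) \<in> M"
        using subspace_scale[OF sub subspace_neg[OF sub sm]] by simp
    qed
    show "\<forall>k\<ge>r. b * a ^ k * dd \<in> M"
    proof (intro allI impI)
      fix k assume "r \<le> k"
      then have "r + (k - r) + L \<ge> L" "r + (k - r) = k" by auto
      then show "b * a ^ k * dd \<in> M" using ind[of "k - r" L] by simp
    qed
  qed
qed

lemma combine:
  fixes P :: nat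
  assumes P: "P > 0" and H: "\<forall>i<P. \<exists>N. \<forall>q\<ge>N. Q (P * q + i)"
  shows "\<exists>L. \<forall>m\<ge>L. Q m"
proof -
  from H have "\<forall>i. \<exists>N. i < P \<longrightarrow> (\<forall>q\<ge>N. Q (P * q + i))" by blast
  then obtain Nf where Nf: "\<And>i q. i < P \<Longrightarrow> q \<ge> Nf i \<Longrightarrow> Q (P * q + i)" by metis
  define S where "S = (\<Sum>i<P. Nf i)"
  show ?thesis
  proof (rule exI[of _ "P * S"], intro allI impI)
    fix m assume m: "P * S \<le> m"
    define q where "q = m div P"
    define i where "i = m mod P"
    have mq: "m = P * q + i" unfolding q_def i_def by simp
    have ip: "i < P" unfolding i_def using P by simp
    have qS: "q \<ge> S"
    proof (rule ccontr)
      assume "\<not> S \<le> q"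
      then have "Suc q \<le> S" by simp
      then have "P * Suc q \<le> P * S" by (rule mult_le_mono2)
      then show False using m mq ip by simp
    qed
    have "Nf i \<le> S" unfolding S_def using ip by (intro member_le_sum) auto
    then show "Q m" using Nf[OF ip, of q] qS mq by simp
  qed
qed

lemma pow_split1: "(a::'a::monoid_mult) ^ (P * q + i) = a ^ i * (a ^ P) ^ q"
  by (metis add.commute power_add power_mult)

lemma pow_split2: "(a::'a::monoid_mult) ^ (P * q + i) = (a ^ P) ^ q * a ^ i"
  by (metis power_add power_mult)

lemma ev_two:
  fixes a :: "'a::ring_1"
  assumes P: "P > 0" and H: "\<forall>b c. \<exists>N. \<forall>m\<ge>N. b * (a ^ P) ^ m * c \<in> M"
  shows "\<exists>L. \<forall>m\<ge>L. b * a ^ m * c \<in> M"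
proof (rule combine[OF P], intro allI impI)
  fix i assume "i < P"
  from H obtain N where "\<forall>m\<ge>N. (b * a ^ i) * (a ^ P) ^ m * c \<in> M" by blast
  moreover have "\<And>q. b * a ^ (P * q + i) * c = (b * a ^ i) * (a ^ P) ^ q * c"
    by (simp only: pow_split1 mult.assoc)
  ultimately show "\<exists>N. \<forall>q\<ge>N. b * a ^ (P * q + i) * c \<in> M" by auto
qed

lemma ev_left:
  fixes a :: "'a::ring_1"
  assumes P: "P > 0" and H: "\<forall>b. \<exists>N. \<forall>m\<ge>N. b * (a ^ P) ^ m \<in> M"
  shows "\<exists>L. \<forall>m\<ge>L. b * a ^ m * 1 \<in> M"
proof (rule combine[OF P], intro allI impI)
  fix i assume "i < P"
  from H obtain N where "\<forall>m\<ge>N. (b * a ^ i) * (a ^ P) ^ m \<in> M" by blast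
  moreover have "\<And>q. b * a ^ (P * q + i) * 1 = (b * a ^ i) * (a ^ P) ^ q"
    by (simp only: pow_split1 mult.assoc mult_1_right)
  ultimately show "\<exists>N. \<forall>q\<ge>N. b * a ^ (P * q + i) * 1 \<in> M" by auto
qed

lemma ev_right:
  fixes a :: "'a::ring_1"
  assumes P: "P > 0" and H: "\<forall>c. \<exists>N. \<forall>m\<ge>N. (a ^ P) ^ m * c \<in> M"
  shows "\<exists>L. \<forall>m\<ge>L. 1 * a ^ m * c \<in> M"
proof (rule combine[OF P], intro allI impI)
  fix i assume "i < P"
  from H obtain N where "\<forall>m\<ge>N. (a ^ P) ^ m * (a ^ i * c) \<in> M" by blast
  moreover have "\<And>q. 1 * a ^ (P * q + i) * c = (a ^ P) ^ q * (a ^ i * c)"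
    by (simp only: pow_split2 mult.assoc mult_1_left)
  ultimately show "\<exists>N. \<forall>q\<ge>N. 1 * a ^ (P * q + i) * c \<in> M" by auto
qed

lemma rad_mono: "A \<subseteq> B \<Longrightarrow> rad A \<subseteq> rad B"
  unfolding rad_def by blast

lemma in_largest: "P I \<Longrightarrow> I \<subseteq> M \<Longrightarrow> x \<in> I \<Longrightarrow> x \<in> largest_in P M"
  unfolding largest_in_def sum_of_sets_def
  by (rule CollectI, rule exI[of _ "{x}"]) auto

lemma zero_largest: "0 \<in> largest_in P M"
  unfolding largest_in_def sum_of_sets_def
  by (rule CollectI, rule exI[of _ "{}"]) auto

lemma main_ev:
  assumes alg: "k_algebra s" and mat: "mathieu s t M"
    and aM: "a \<in> rad M" and ao: "algebraic_over s a"
  shows "\<exists>r. \<forall>k\<ge>r.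
     (t \<in> {LeftT, PreTwoT} \<longrightarrow> (\<forall>b. b * a ^ k \<in> M)) \<and>
     (t \<in> {RightT, PreTwoT} \<longrightarrow> (\<forall>c. a ^ k * c \<in> M)) \<and>
     (t = TwoT \<longrightarrow> (\<forall>b c. b * a ^ k * c \<in> M))"
proof -
  have sub: "module.subspace s M" using mat unfolding mathieu_def by blast
  obtain N where N: "\<forall>m\<ge>N. a ^ m \<in> M" using aM unfolding rad_def by blast
  define P where "P = Suc N"
  have P0: "P > 0" unfolding P_def by simp
  have pw: "\<forall>m\<ge>1. (a ^ P) ^ m \<in> M"
  proof (intro allI impI)
    fix m :: nat assume "1 \<le> m"
    then have "P * 1 \<le> P * m" by (rule mult_le_mono2)
    then have "P * m \<ge> N" unfolding P_def by simp
    then have "a ^ (P * m) \<in> M" using N by blast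
    then show "(a ^ P) ^ m \<in> M" by (simp only: power_mult)
  qed
  have MP: "case t of
           LeftT \<Rightarrow> (\<forall>b. \<exists>N. \<forall>m\<ge>N. b * (a ^ P) ^ m \<in> M)
         | RightT \<Rightarrow> (\<forall>b. \<exists>N. \<forall>m\<ge>N. (a ^ P) ^ m * b \<in> M)
         | PreTwoT \<Rightarrow> (\<forall>b. \<exists>N. \<forall>m\<ge>N. b * (a ^ P) ^ m \<in> M) \<and>
                      (\<forall>b. \<exists>N. \<forall>m\<ge>N. (a ^ P) ^ m * b \<in> M)
         | TwoT \<Rightarrow> (\<forall>b c. \<exists>N. \<forall>m\<ge>N. b * (a ^ P) ^ m * c \<in> M)"
    using mat pw unfolding mathieu_def by blast
  obtain r where r: "\<And>b d L. (\<forall>m\<ge>L. b * a ^ m * d \<in> M) \<Longrightarrow> (\<forall>k\<ge>r. b * a ^ k * d \<in> M)"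
    using shift[OF alg sub ao] by blast
  have L: "\<forall>k\<ge>r. \<forall>b. b * a ^ k \<in> M" if HH: "\<forall>b. \<exists>N. \<forall>m\<ge>N. b * (a ^ P) ^ m \<in> M"
  proof (intro allI impI)
    fix k b assume k: "r \<le> k"
    obtain L where "\<forall>m\<ge>L. b * a ^ m * 1 \<in> M" using ev_left[OF P0 HH] by blast
    then have "\<forall>k\<ge>r. b * a ^ k * 1 \<in> M" by (rule r)
    then show "b * a ^ k \<in> M" using k by simp
  qed
  have R: "\<forall>k\<ge>r. \<forall>c. a ^ k * c \<in> M" if HH: "\<forall>c. \<exists>N. \<forall>m\<ge>N. (a ^ P) ^ m * c \<in> M"
  proof (intro allI impI)
    fix k c assume k: "r \<le> k"
    obtain L where "\<forall>m\<ge>L. 1 * a ^ m * c \<in> M" using ev_right[OF P0 HH] by blast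
    then have "\<forall>k\<ge>r. 1 * a ^ k * c \<in> M" by (rule r)
    then show "a ^ k * c \<in> M" using k by simp
  qed
  have T: "\<forall>k\<ge>r. \<forall>b c. b * a ^ k * c \<in> M" if HH: "\<forall>b c. \<exists>N. \<forall>m\<ge>N. b * (a ^ P) ^ m * c \<in> M"
  proof (intro allI impI)
    fix k b c assume k: "r \<le> k"
    obtain L where "\<forall>m\<ge>L. b * a ^ m * c \<in> M" using ev_two[OF P0 HH] by blast
    then have "\<forall>k\<ge>r. b * a ^ k * c \<in> M" by (rule r)
    then show "b * a ^ k * c \<in> M" using k by simp
  qed
  show ?thesis
  proof (cases t)
    case LeftT then show ?thesis using MP L by (intro exI[of _ r]) auto
  next
    case RightT then show ?thesis using MP R by (intro exI[of _ r]) auto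
  next
    case PreTwoT then show ?thesis using MP L R by (intro exI[of _ r]) auto
  next
    case TwoT then show ?thesis using MP T by (intro exI[of _ r]) auto
  qed
qed

theorem theorem4p10:
  fixes s :: "'k::field \<Rightarrow> 'a::ring_1 \<Rightarrow> 'a"
    and t :: mtype and M V :: "'a set"
  assumes "k_algebra s"
    and "mathieu s t M"
    and "\<forall>a\<in>rad M. algebraic_over s a"
    and "module.subspace s V" and "V \<subseteq> M"
    and "I_M t M \<subseteq> V"
  shows "mathieu s t V \<and> rad V = rad (I_M t M)"
proof -
  note alg = assms(1) and mat = assms(2)
  interpret vector_space s using alg unfolding k_algebra_def by blast
  have sub: "subspace M" using mat unfolding mathieu_def by blast
  define Ls where "Ls = {x. \<forall>b. b * x \<in> M}"
  define Rs where "Rs = {x. \<forall>c. x * c \<in> M}"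
  define Ts where "Ts = {x. \<forall>b c. b * x * c \<in> M}"
  have lL: "left_ideal Ls" unfolding left_ideal_def Ls_def
    using subspace_0[OF sub] subspace_add[OF sub] by (auto simp: distrib_left mult.assoc[symmetric])
  have rR: "right_ideal Rs" unfolding right_ideal_def Rs_def
    using subspace_0[OF sub] subspace_add[OF sub] by (auto simp: distrib_right mult.assoc)
  have tT: "twosided_ideal Ts" unfolding twosided_ideal_def left_ideal_def right_ideal_def Ts_def
    using subspace_0[OF sub] subspace_add[OF sub] by (auto simp: distrib_left distrib_right mult.assoc)
      (metis mult.assoc)
  have LsM: "Ls \<subseteq> M" unfolding Ls_def by (auto dest: spec[of _ 1])
  have RsM: "Rs \<subseteq> M" unfolding Rs_def by (auto dest: spec[of _ 1])
  have TsM: "Ts \<subseteq> M" unfolding Ts_def by (auto dest!: spec[of _ 1])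
  have IL1: "x \<in> I_M LeftT M" if "x \<in> Ls" for x
    unfolding I_M_def using in_largest[where P=left_ideal, OF lL LsM that] by simp
  have IL2: "x \<in> I_M PreTwoT M" if "x \<in> Ls" for x
    unfolding I_M_def using in_largest[where P=left_ideal, OF lL LsM that] zero_largest
    by simp (intro exI[of _ x] exI[of _ 0]; simp add: zero_largest)
  have IR1: "x \<in> I_M RightT M" if "x \<in> Rs" for x
    unfolding I_M_def using in_largest[where P=right_ideal, OF rR RsM that] by simp
  have IR2: "x \<in> I_M PreTwoT M" if "x \<in> Rs" for x
    unfolding I_M_def using in_largest[where P=right_ideal, OF rR RsM that] zero_largest
    by simp (intro exI[of _ 0] exI[of _ x]; simp add: zero_largest)
  have IT: "x \<in> I_M TwoT M" if "x \<in> Ts" for x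
    unfolding I_M_def using in_largest[where P=twosided_ideal, OF tT TsM that] by simp
  have Lcl: "b * x \<in> Ls" if "x \<in> Ls" for x b using that unfolding Ls_def by (simp add: mult.assoc[symmetric])
  have Rcl: "x * c \<in> Rs" if "x \<in> Rs" for x c using that unfolding Rs_def by (simp add: mult.assoc)
  have Tcl: "b * x * c \<in> Ts" if "x \<in> Ts" for x b c
    unfolding Ts_def
  proof (intro CollectI allI)
    fix b' c'
    have "(b' * b) * x * (c * c') \<in> M" using that unfolding Ts_def by blast
    moreover have "b' * (b * x * c) * c' = (b' * b) * x * (c * c')" by (simp add: mult.assoc)
    ultimately show "b' * (b * x * c) * c' \<in> M" by simp
  qed
  have ev: "\<exists>r. \<forall>k\<ge>r.
     (t \<in> {LeftT, PreTwoT} \<longrightarrow> a ^ k \<in> Ls) \<and>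
     (t \<in> {RightT, PreTwoT} \<longrightarrow> a ^ k \<in> Rs) \<and>
     (t = TwoT \<longrightarrow> a ^ k \<in> Ts)" if aM: "a \<in> rad M" for a
  proof -
    have ao: "algebraic_over s a" using assms(3) aM by blast
    obtain r where r: "\<forall>k\<ge>r.
     (t \<in> {LeftT, PreTwoT} \<longrightarrow> (\<forall>b. b * a ^ k \<in> M)) \<and>
     (t \<in> {RightT, PreTwoT} \<longrightarrow> (\<forall>c. a ^ k * c \<in> M)) \<and>
     (t = TwoT \<longrightarrow> (\<forall>b c. b * a ^ k * c \<in> M))"
      using main_ev[OF alg mat aM ao] by blast
    show ?thesis by (rule exI[of _ r]) (simp add: r Ls_def Rs_def Ts_def)
  qed
  have r1: "rad M \<subseteq> rad (I_M t M)"
  proof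
    fix a assume aM: "a \<in> rad M"
    obtain r where r: "\<forall>k\<ge>r.
     (t \<in> {LeftT, PreTwoT} \<longrightarrow> a ^ k \<in> Ls) \<and>
     (t \<in> {RightT, PreTwoT} \<longrightarrow> a ^ k \<in> Rs) \<and>
     (t = TwoT \<longrightarrow> a ^ k \<in> Ts)" using ev[OF aM] by blast
    have "\<forall>k\<ge>r. a ^ k \<in> I_M t M"
      using r IL1 IL2 IR1 IT by (cases t) auto
    then show "a \<in> rad (I_M t M)" unfolding rad_def by blast
  qed
  have radeq: "rad V = rad (I_M t M)"
    using r1 rad_mono[OF assms(5)] rad_mono[OF assms(6)] by blast
  have "mathieu s t V"
    unfolding mathieu_def
  proof (intro conjI allI impI)
    show "module.subspace s V" by (rule assms(4))
    fix a assume av: "\<forall>m\<ge>1. a ^ m \<in> V"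
    then have aM: "a \<in> rad M" unfolding rad_def using assms(5) by blast
    obtain r where r: "\<forall>k\<ge>r.
     (t \<in> {LeftT, PreTwoT} \<longrightarrow> a ^ k \<in> Ls) \<and>
     (t \<in> {RightT, PreTwoT} \<longrightarrow> a ^ k \<in> Rs) \<and>
     (t = TwoT \<longrightarrow> a ^ k \<in> Ts)" using ev[OF aM] by blast
    show "case t of
           LeftT \<Rightarrow> (\<forall>b. \<exists>N. \<forall>m\<ge>N. b * a ^ m \<in> V)
         | RightT \<Rightarrow> (\<forall>b. \<exists>N. \<forall>m\<ge>N. a ^ m * b \<in> V)
         | PreTwoT \<Rightarrow> (\<forall>b. \<exists>N. \<forall>m\<ge>N. b * a ^ m \<in> V) \<and>
                      (\<forall>b. \<exists>N. \<forall>m\<ge>N. a ^ m * b \<in> V)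
         | TwoT \<Rightarrow> (\<forall>b c. \<exists>N. \<forall>m\<ge>N. b * a ^ m * c \<in> V)"
    proof -
      have VL: "\<forall>b. \<exists>N. \<forall>m\<ge>N. b * a ^ m \<in> V" if tL: "t \<in> {LeftT, PreTwoT}"
      proof (intro allI exI[of _ r] impI)
        fix b m assume "r \<le> m"
        then have "a ^ m \<in> Ls" using r tL by blast
        then have "b * a ^ m \<in> Ls" by (rule Lcl)
        then have "b * a ^ m \<in> I_M t M" using IL1 IL2 tL by auto
        then show "b * a ^ m \<in> V" using assms(6) by blast
      qed
      have VR: "\<forall>b. \<exists>N. \<forall>m\<ge>N. a ^ m * b \<in> V" if tR: "t \<in> {RightT, PreTwoT}"
      proof (intro allI exI[of _ r] impI)
        fix b m assume "r \<le> m"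
        then have "a ^ m \<in> Rs" using r tR by blast
        then have "a ^ m * b \<in> Rs" by (rule Rcl)
        then have "a ^ m * b \<in> I_M t M" using IR1 IR2 tR by auto
        then show "a ^ m * b \<in> V" using assms(6) by blast
      qed
      have VT: "\<forall>b c. \<exists>N. \<forall>m\<ge>N. b * a ^ m * c \<in> V" if tT: "t = TwoT"
      proof (intro allI exI[of _ r] impI)
        fix b c m assume "r \<le> m"
        then have "a ^ m \<in> Ts" using r tT by blast
        then have "b * a ^ m * c \<in> Ts" by (rule Tcl)
        then have "b * a ^ m * c \<in> I_M t M" using IT tT by auto
        then show "b * a ^ m * c \<in> V" using assms(6) by blast
      qed
      show ?thesis using VL VR VT by (cases t) simp_all
    qed
  qed
  then show ?thesis using radeq by blast
qed

end
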